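(* Let $q$ be a positive integer, $0\leq\alpha<1$ and $\tau>0$. Then there exists a constant $C=C(\tau,\alpha)>0$ with the following property. Let $(a_j)_{j=q}^\infty$ be a nondecreasing sequence of positive real numbers and $$b_j=\begin{cases}\tau j^{1/\alpha}, & \alpha>0,\\ e^{\tau j}, & \alpha=0.\end{cases}$$ Suppose $j+1\leq a_j\leq b_j$ for all $j=q,q+1,q+2,\dots$. Then there exists an integer $k\geq q$ such that $$a_{k+1}-a_k\leq C(a_k-k)^{1-\alpha}.$$ *)

theory Defs
  imports Complex_Main
begin

definition bseq :: "real \<Rightarrow> real \<Rightarrow> nat \<Rightarrow> real" where
  "bseq \<tau> \<alpha> j = (if \<alpha> > 0 then \<tau> * real j powr (1 / \<alpha>) else exp (\<tau> * real j))"

end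

theory Submission imports Defs "HOL-Analysis.Analysis" begin

lemma step_pos:
  fixes \<alpha> c M \<delta> x y :: real
  assumes a0: "0 < \<alpha>" and a1: "\<alpha> < 1" and M: "M > 1" and Md: "M powr \<alpha> - 1 \<ge> \<delta>"
    and c: "c > 0" and cd: "\<alpha> * c * M powr (\<alpha> - 1) \<ge> \<delta>"
    and x: "x \<ge> 1" and xy: "y - x \<ge> c * x powr (1 - \<alpha>)"
  shows "y powr \<alpha> - x powr \<alpha> \<ge> \<delta>"
proof -
  have xp: "x powr (1-\<alpha>) > 0" using x by simp
  have yx: "y \<ge> x" using xy c xp by (smt (verit) mult_pos_pos)
  have y: "y > 0" using yx x by simp
  have "(x/y) powr \<alpha> * 1 powr (1-\<alpha>) \<le> \<alpha>*(x/y) + (1-\<alpha>)*1"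
    by (rule Youngs_inequality_0) (use a0 a1 x y in auto)
  hence t: "x powr \<alpha> \<le> \<alpha> * x * y powr (\<alpha> - 1) + (1-\<alpha>) * y powr \<alpha>"
  proof -
    assume h: "(x/y) powr \<alpha> * 1 powr (1-\<alpha>) \<le> \<alpha>*(x/y) + (1-\<alpha>)*1"
    have "x powr \<alpha> = (x/y) powr \<alpha> * y powr \<alpha>" using x y by (simp add: powr_divide)
    also have "\<dots> \<le> (\<alpha>*(x/y) + (1-\<alpha>)) * y powr \<alpha>"
      using h by (intro mult_right_mono) auto
    also have "\<dots> = \<alpha> * x * (y powr \<alpha> / y) + (1-\<alpha>) * y powr \<alpha>"
      by (simp add: field_simps)
    also have "y powr \<alpha> / y = y powr (\<alpha> - 1)" using y by (simp add: powr_diff)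
    finally show ?thesis .
  qed
  have inc: "y powr \<alpha> - x powr \<alpha> \<ge> \<alpha> * y powr (\<alpha> - 1) * (y - x)"
  proof -
    have "y * y powr (\<alpha> - 1) = y powr \<alpha>" using y by (simp add: powr_mult_base)
    thus ?thesis using t by (simp add: algebra_simps)
  qed
  show ?thesis
  proof (cases "y \<le> M * x")
    case True
    have "y powr (\<alpha> - 1) \<ge> (M*x) powr (\<alpha> - 1)"
      by (rule powr_mono2') (use True a1 y in auto)
    also have "(M*x) powr (\<alpha> - 1) = M powr (\<alpha>-1) * x powr (\<alpha> - 1)"
      using M x by (simp add: powr_mult)
    finally have yb: "y powr (\<alpha> - 1) \<ge> M powr (\<alpha>-1) * x powr (\<alpha> - 1)" .
    have "\<alpha> * y powr (\<alpha> - 1) * (y - x) \<ge> \<alpha> * (M powr (\<alpha>-1) * x powr (\<alpha> - 1)) * (c * x powr (1 - \<alpha>))"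
      using yb xy a0 c xp by (intro mult_mono mult_left_mono) auto
    also have "\<alpha> * (M powr (\<alpha>-1) * x powr (\<alpha> - 1)) * (c * x powr (1 - \<alpha>)) = \<alpha> * c * M powr (\<alpha>-1) * (x powr (\<alpha> - 1) * x powr (1 - \<alpha>))"
      by simp
    also have "x powr (\<alpha> - 1) * x powr (1 - \<alpha>) = 1" using x by (simp flip: powr_add)
    finally show ?thesis using inc cd by simp
  next
    case False
    have "y powr \<alpha> \<ge> (M*x) powr \<alpha>" using False a0 x M by (intro powr_mono2) auto
    also have "(M*x) powr \<alpha> = M powr \<alpha> * x powr \<alpha>" using M x by (simp add: powr_mult)
    finally have "y powr \<alpha> - x powr \<alpha> \<ge> (M powr \<alpha> - 1) * x powr \<alpha>" by (simp add: algebra_simps)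
    moreover have "x powr \<alpha> \<ge> 1" using x a0 by (simp add: ge_one_powr_ge_zero)
    moreover have "M powr \<alpha> - 1 \<ge> 0" using M a0 by (simp add: ge_one_powr_ge_zero)
    ultimately have "y powr \<alpha> - x powr \<alpha> \<ge> M powr \<alpha> - 1"
    proof -
      assume h1: "(M powr \<alpha> - 1) * x powr \<alpha> \<le> y powr \<alpha> - x powr \<alpha>"
        and h2: "1 \<le> x powr \<alpha>" and h3: "0 \<le> M powr \<alpha> - 1"
      have "(M powr \<alpha> - 1) * 1 \<le> (M powr \<alpha> - 1) * x powr \<alpha>"
        by (rule mult_left_mono[OF h2 h3])
      from order_trans[OF this h1] show ?thesis by simp
    qed
    thus ?thesis using Md by simp
  qed
qed
lemma grow_pos:
  fixes \<alpha> c M \<delta> :: real and d :: "nat \<Rightarrow> real"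
  assumes a0: "0 < \<alpha>" and a1: "\<alpha> < 1" and M: "M > 1" and Md: "M powr \<alpha> - 1 \<ge> \<delta>"
    and c: "c > 0" and cd: "\<alpha> * c * M powr (\<alpha> - 1) \<ge> \<delta>"
    and d1: "\<forall>j\<ge>q. d j \<ge> 1" and dd: "\<forall>k\<ge>q. d (Suc k) - d k \<ge> c * d k powr (1-\<alpha>)"
  shows "d (q+n) powr \<alpha> \<ge> \<delta> * real n"
proof (induction n)
  case 0 then show ?case by simp
next
  case (Suc n)
  have "d (Suc (q+n)) powr \<alpha> - d (q+n) powr \<alpha> \<ge> \<delta>"
    by (rule step_pos[OF a0 a1 M Md c cd]) (use d1 dd in auto)
  then show ?case using Suc by (simp add: algebra_simps)
qed

lemma grow_log:
  fixes c \<delta> :: real and d :: "nat \<Rightarrow> real"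
  assumes c: "c > 0" and cd: "ln (1 + c) \<ge> \<delta>"
    and d1: "\<forall>j\<ge>q. d j \<ge> 1" and dd: "\<forall>k\<ge>q. d (Suc k) - d k \<ge> c * d k"
  shows "ln (d (q+n)) \<ge> \<delta> * real n"
proof (induction n)
  case 0 then show ?case using d1 by simp
next
  case (Suc n)
  have x: "d (q+n) \<ge> 1" using d1 by auto
  have "d (Suc (q+n)) \<ge> (1+c) * d (q+n)" using dd by (auto simp: algebra_simps)
  moreover have pos: "(1+c) * d (q+n) > 0" using x c by simp
  ultimately have "ln (d (Suc (q+n))) \<ge> ln ((1+c) * d (q+n))" by (subst ln_le_cancel_iff) auto
  also have "ln ((1+c) * d (q+n)) = ln (1+c) + ln (d (q+n))" using x c by (simp add: ln_mult)
  finally show ?case using Suc cd by (simp add: algebra_simps)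
qed

theorem lemma3p4:
  fixes \<tau> \<alpha> :: real
  assumes "0 \<le> \<alpha>" and "\<alpha> < 1" and "\<tau> > 0"
  shows "\<exists>C>0. \<forall>(q::nat) (a::nat \<Rightarrow> real).
           q \<ge> 1 \<longrightarrow>
           (\<forall>j\<ge>q. a j > 0) \<longrightarrow>
           (\<forall>i j. q \<le> i \<longrightarrow> i \<le> j \<longrightarrow> a i \<le> a j) \<longrightarrow>
           (\<forall>j\<ge>q. real j + 1 \<le> a j \<and> a j \<le> bseq \<tau> \<alpha> j) \<longrightarrow>
           (\<exists>k\<ge>q. a (Suc k) - a k \<le> C * (a k - real k) powr (1 - \<alpha>))"
proof (cases "\<alpha> = 0")
  case True
  define c where "c = max 1 (exp (2*\<tau>) - 1)"
  have c1: "c \<ge> 1" unfolding c_def by simp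
  have cd: "ln (1 + c) \<ge> 2*\<tau>"
  proof -
    have "1 + c \<ge> exp (2*\<tau>)" unfolding c_def by simp
    hence "ln (exp (2*\<tau>)) \<le> ln (1 + c)" using c1 by (subst ln_le_cancel_iff) auto
    thus ?thesis by simp
  qed
  show ?thesis
  proof (intro exI[of _ "2*c"] conjI allI impI)
    show "2*c > 0" using c1 by simp
    fix q :: nat and a :: "nat \<Rightarrow> real"
    assume q: "q \<ge> 1" and "\<forall>j\<ge>q. a j > 0" and "\<forall>i j. q \<le> i \<longrightarrow> i \<le> j \<longrightarrow> a i \<le> a j"
      and ab: "\<forall>j\<ge>q. real j + 1 \<le> a j \<and> a j \<le> bseq \<tau> \<alpha> j"
    show "\<exists>k\<ge>q. a (Suc k) - a k \<le> 2*c * (a k - real k) powr (1 - \<alpha>)"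
    proof (rule ccontr)
      assume "\<not> ?thesis"
      hence H0: "\<forall>k\<ge>q. a (Suc k) - a k > 2*c * (a k - real k) powr (1 - \<alpha>)"
        using not_le by blast
      have H: "\<forall>k\<ge>q. a (Suc k) - a k > 2*c * (a k - real k)"
      proof (intro allI impI)
        fix k assume k: "k \<ge> q"
        have "a k - real k \<ge> 0" using ab k by force
        hence "(a k - real k) powr (1 - \<alpha>) = a k - real k" using True by simp
        thus "a (Suc k) - a k > 2*c * (a k - real k)" using H0 k by metis
      qed
      define d where "d j = a j - real j" for j
      have d1: "\<forall>j\<ge>q. d j \<ge> 1" using ab unfolding d_def by force
      have dd: "\<forall>k\<ge>q. d (Suc k) - d k \<ge> c * d k"
      proof (intro allI impI)
        fix k assume k: "k \<ge> q"
        have "1 * 1 \<le> c * d k" using c1 d1 k by (intro mult_mono) auto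
        hence "c * d k \<ge> 1" by simp
        thus "d (Suc k) - d k \<ge> c * d k" using H k unfolding d_def by auto
      qed
      have g: "ln (d (q + Suc q)) \<ge> 2*\<tau> * real (Suc q)"
        by (rule grow_log[OF _ cd d1 dd]) (use c1 in simp)
      have "d (q + Suc q) \<le> exp (\<tau> * real (q + Suc q))"
        using ab[rule_format, of "q + Suc q"] True unfolding d_def bseq_def by auto
      hence "ln (d (q + Suc q)) \<le> \<tau> * real (q + Suc q)"
      proof -
        assume h: "d (q + Suc q) \<le> exp (\<tau> * real (q + Suc q))"
        have "d (q + Suc q) > 0" using d1 by (smt (verit) le_add1)
        hence "ln (d (q + Suc q)) \<le> ln (exp (\<tau> * real (q + Suc q)))" using h by (subst ln_le_cancel_iff) auto
        thus ?thesis by simp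
      qed
      with g show False using \<open>\<tau> > 0\<close> by (simp add: algebra_simps)
    qed
  qed
next
  case False
  hence a0: "\<alpha> > 0" using assms by simp
  define M where "M = (1 + 2 * \<tau> powr \<alpha>) powr (1/\<alpha>)"
  have tp: "\<tau> powr \<alpha> > 0" using assms by simp
  have Ma: "M powr \<alpha> = 1 + 2 * \<tau> powr \<alpha>" unfolding M_def using a0 tp by (simp add: powr_powr)
  have M1: "M > 1" unfolding M_def using a0 tp by (intro gr_one_powr) auto
  define c where "c = max 1 (2 * \<tau> powr \<alpha> * M powr (1-\<alpha>) / \<alpha>)"
  have c1: "c \<ge> 1" unfolding c_def by simp
  have cd: "\<alpha> * c * M powr (\<alpha> - 1) \<ge> 2 * \<tau> powr \<alpha>"
  proof -
    have "\<alpha> * c * M powr (\<alpha> - 1) \<ge> \<alpha> * (2 * \<tau> powr \<alpha> * M powr (1-\<alpha>) / \<alpha>) * M powr (\<alpha> - 1)"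
      unfolding c_def using a0 M1 by (intro mult_right_mono mult_left_mono) auto
    also have "\<alpha> * (2 * \<tau> powr \<alpha> * M powr (1-\<alpha>) / \<alpha>) * M powr (\<alpha> - 1) = 2 * \<tau> powr \<alpha> * (M powr (1-\<alpha>) * M powr (\<alpha> - 1))"
      using a0 by simp
    also have "M powr (1-\<alpha>) * M powr (\<alpha> - 1) = 1" using M1 by (simp flip: powr_add)
    finally show ?thesis by simp
  qed
  have Md: "M powr \<alpha> - 1 \<ge> 2 * \<tau> powr \<alpha>" using Ma by simp
  show ?thesis
  proof (intro exI[of _ "2*c"] conjI allI impI)
    show "2*c > 0" using c1 by simp
    fix q :: nat and a :: "nat \<Rightarrow> real"
    assume q: "q \<ge> 1" and "\<forall>j\<ge>q. a j > 0" and "\<forall>i j. q \<le> i \<longrightarrow> i \<le> j \<longrightarrow> a i \<le> a j"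
      and ab: "\<forall>j\<ge>q. real j + 1 \<le> a j \<and> a j \<le> bseq \<tau> \<alpha> j"
    show "\<exists>k\<ge>q. a (Suc k) - a k \<le> 2*c * (a k - real k) powr (1 - \<alpha>)"
    proof (rule ccontr)
      assume "\<not> ?thesis"
      hence H: "\<forall>k\<ge>q. a (Suc k) - a k > 2*c * (a k - real k) powr (1 - \<alpha>)"
        using not_le by blast
      define d where "d j = a j - real j" for j
      have d1: "\<forall>j\<ge>q. d j \<ge> 1" using ab unfolding d_def by force
      have dd: "\<forall>k\<ge>q. d (Suc k) - d k \<ge> c * d k powr (1 - \<alpha>)"
      proof (intro allI impI)
        fix k assume k: "k \<ge> q"
        have "d k powr (1 - \<alpha>) \<ge> 1" using d1 k assms by (simp add: ge_one_powr_ge_zero)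
        hence "1 * 1 \<le> c * d k powr (1 - \<alpha>)" using c1 by (intro mult_mono) auto
        hence "c * d k powr (1 - \<alpha>) \<ge> 1" by simp
        thus "d (Suc k) - d k \<ge> c * d k powr (1 - \<alpha>)" using H k unfolding d_def by auto
      qed
      have g: "d (q + Suc q) powr \<alpha> \<ge> 2 * \<tau> powr \<alpha> * real (Suc q)"
        by (rule grow_pos[OF a0 assms(2) M1 Md _ cd d1 dd]) (use c1 in simp)
      have "d (q + Suc q) \<le> \<tau> * real (q + Suc q) powr (1/\<alpha>)"
        using ab[rule_format, of "q + Suc q"] a0 unfolding d_def bseq_def by auto
      hence "d (q + Suc q) powr \<alpha> \<le> (\<tau> * real (q + Suc q) powr (1/\<alpha>)) powr \<alpha>"
        using d1[rule_format, of "q + Suc q"] a0 by (intro powr_mono2) auto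
      also have "\<dots> = \<tau> powr \<alpha> * real (q + Suc q)"
        using assms a0 by (simp add: powr_mult powr_powr)
      finally show False using g tp by (simp add: algebra_simps)
    qed
  qed
qed
end
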